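(* Let $\Omega^{+}_{\mathrm{even}}$ (resp. $\Omega^-_{\mathrm{even}}$) be the set of $(b,a,c,|\xi|)\in R$ for which \[ 2\lambda_{\mathrm{even}}[a+c-(b+1)\beta^2]=5\beta(\beta-\lambda_{\mathrm{even}})(\lambda_{\mathrm{even}}-\beta b),\qquad \lambda_{\mathrm{even}}=\frac{5\beta(ab+c-2\beta^2b)}{a+c-(b+1)\beta^2}, \] holds with $\beta=\sqrt{\big(ab+c\pm\sqrt{(c-ab)^2+4|\xi|^2b}\big)/(2b)}$, the sign $+$ (resp. $-$) being used. Then $\Omega^\pm_{\mathrm{even}}$ are non-empty and unbounded, and if $(b,a,c,|\xi|)\in\Omega^\pm_{\mathrm{even}}$ then $(b,ra,rc,r|\xi|)\in\Omega^\pm_{\mathrm{even}}$ for every $r>0$.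
   Context: $R:=\{(b,a,c,|\xi|)\in\mathbb{R}^4: a,c>0,\ b\ge 1,\ 0\le|\xi|^2<ac\}$ parametrizes pairs $A=\begin{pmatrix}a&\xi\\\overline\xi&c\end{pmatrix}$, $B=\begin{pmatrix}1&0\\0&b\end{pmatrix}$ of positive definite matrices. Points considered are those for which the quantities above are defined (in particular $b>1$, $|\xi|>0$). *)

theory Defs
  imports "HOL-Analysis.Analysis"
begin

definition sgn_sel :: "bool \<Rightarrow> real" where
  "sgn_sel pl = (if pl then 1 else -1)"

text \<open>beta = sqrt((ab+c +- sqrt((c-ab)^2+4|xi|^2 b))/(2b)); x stands for |xi|.\<close>
definition beta_even :: "bool \<Rightarrow> real \<Rightarrow> real \<Rightarrow> real \<Rightarrow> real \<Rightarrow> real" where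
  "beta_even pl b a c x =
     sqrt ((a*b + c + sgn_sel pl * sqrt ((c - a*b)^2 + 4 * x^2 * b)) / (2*b))"

definition lambda_even :: "real \<Rightarrow> real \<Rightarrow> real \<Rightarrow> real \<Rightarrow> real" where
  "lambda_even bt b a c = 5 * bt * (a*b + c - 2 * bt^2 * b) / (a + c - (b+1) * bt^2)"

text \<open>Points (b,a,c,|xi|) of R at which all quantities are defined
  (b > 1, |xi| > 0, nonzero denominator) and the equation holds.\<close>
definition Omega_even :: "bool \<Rightarrow> (real \<times> real \<times> real \<times> real) set" where
  "Omega_even pl = {(b, a, c, x). a > 0 \<and> c > 0 \<and> b > 1 \<and> x > 0 \<and> x^2 < a * c \<and>
     (let bt = beta_even pl b a c x; lam = lambda_even bt b a c in
        a + c - (b+1) * bt^2 \<noteq> 0 \<and>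
        2 * lam * (a + c - (b+1) * bt^2) = 5 * bt * (bt - lam) * (lam - bt * b))}"

end

theory Submission
  imports Defs
begin

lemma beta_scale:
  assumes q: "q > 0" and b: "b > 0"
  shows "beta_even pl b (q^2*a) (q^2*c) (q^2*x) = q * beta_even pl b a c x"
proof -
  have "(q^2*c - q^2*a*b)^2 + 4*(q^2*x)^2*b = (q^2)^2 * ((c - a*b)^2 + 4*x^2*b)"
    by (simp add: algebra_simps power2_eq_square)
  moreover have "sqrt ((q^2)^2 * ((c - a*b)^2 + 4*x^2*b)) = sqrt ((q^2)^2) * sqrt ((c - a*b)^2 + 4*x^2*b)"
    by (rule real_sqrt_mult)
  moreover have "sqrt ((q^2)^2) = q^2" by (rule real_sqrt_unique) auto
  ultimately have i: "sqrt ((q^2*c - q^2*a*b)^2 + 4*(q^2*x)^2*b) = q^2 * sqrt ((c - a*b)^2 + 4*x^2*b)"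
    by simp
  have "(q^2*a*b + q^2*c + sgn_sel pl * (q^2 * sqrt ((c - a*b)^2 + 4*x^2*b))) / (2*b)
      = q^2 * ((a*b + c + sgn_sel pl * sqrt ((c - a*b)^2 + 4*x^2*b)) / (2*b))"
    by (simp add: algebra_simps)
  moreover have "sqrt (q^2 * ((a*b + c + sgn_sel pl * sqrt ((c - a*b)^2 + 4*x^2*b)) / (2*b)))
     = q * sqrt ((a*b + c + sgn_sel pl * sqrt ((c - a*b)^2 + 4*x^2*b)) / (2*b))"
    using q by (simp only: real_sqrt_mult real_sqrt_abs abs_of_pos)
  ultimately show ?thesis unfolding beta_even_def using i
    by (metis mult.assoc)
qed

lemma lambda_scale:
  "lambda_even (q*bt) b (q^2*a) (q^2*c) = q * lambda_even bt b a c"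
proof (cases "q = 0")
  case True thus ?thesis by (simp add: lambda_even_def)
next
  case False
  have "q^2*a + q^2*c - (b+1)*(q*bt)^2 = q^2 * (a + c - (b+1)*bt^2)"
    by (simp add: algebra_simps power2_eq_square)
  moreover have "5*(q*bt)*(q^2*a*b + q^2*c - 2*(q*bt)^2*b) = q^3 * (5*bt*(a*b + c - 2*bt^2*b))"
    by (simp add: algebra_simps power2_eq_square power3_eq_cube)
  ultimately have "lambda_even (q*bt) b (q^2*a) (q^2*c) = (q^3 * (5*bt*(a*b + c - 2*bt^2*b))) / (q^2 * (a + c - (b+1)*bt^2))"
    unfolding lambda_even_def by simp
  also have "\<dots> = q * lambda_even bt b a c" unfolding lambda_even_def using False
    by (simp add: power2_eq_square power3_eq_cube)
  finally show ?thesis .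
qed

lemma scale_mem:
  assumes m: "(b, a, c, x) \<in> Omega_even pl" and q: "q > 0"
  shows "(b, q^2*a, q^2*c, q^2*x) \<in> Omega_even pl"
proof -
  define bt where "bt = beta_even pl b a c x"
  define lam where "lam = lambda_even bt b a c"
  from m have h: "a > 0" "c > 0" "b > 1" "x > 0" "x^2 < a*c"
     "a + c - (b+1) * bt^2 \<noteq> 0"
     "2 * lam * (a + c - (b+1) * bt^2) = 5 * bt * (bt - lam) * (lam - bt * b)"
    unfolding Omega_even_def bt_def lam_def by (auto simp: Let_def)
  have B: "beta_even pl b (q^2*a) (q^2*c) (q^2*x) = q*bt"
    using beta_scale[OF q, of b pl a c x] h(3) bt_def by simp
  have L: "lambda_even (q*bt) b (q^2*a) (q^2*c) = q*lam"
    using lambda_scale lam_def by simp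
  have D: "q^2*a + q^2*c - (b+1)*(q*bt)^2 = q^2 * (a + c - (b+1)*bt^2)"
    by (simp add: algebra_simps power2_eq_square)
  have E: "2 * (q*lam) * (q^2*a + q^2*c - (b+1)*(q*bt)^2)
      = 5 * (q*bt) * (q*bt - q*lam) * (q*lam - q*bt * b)"
  proof -
    have "2 * (q*lam) * (q^2*a + q^2*c - (b+1)*(q*bt)^2) = q^3 * (2 * lam * (a + c - (b+1) * bt^2))"
      unfolding D by (simp add: algebra_simps power2_eq_square power3_eq_cube)
    also have "\<dots> = q^3 * (5 * bt * (bt - lam) * (lam - bt * b))" using h(7) by simp
    also have "\<dots> = 5 * (q*bt) * (q*bt - q*lam) * (q*lam - q*bt * b)"
      by (simp add: algebra_simps power2_eq_square power3_eq_cube)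
    finally show ?thesis .
  qed
  have "(q^2*x)^2 < (q^2*a)*(q^2*c)"
  proof -
    have "(q^2*x)^2 = (q^2)^2 * x^2" by (simp add: power_mult_distrib)
    also have "\<dots> < (q^2)^2 * (a*c)" using h(5) q by simp
    finally show ?thesis by (simp add: algebra_simps power2_eq_square)
  qed
  moreover have n: "q^2 * (a + c - (b+1)*bt^2) \<noteq> 0" using h(6) q by simp
  moreover have "q^2*a + q^2*c - (b+1)*(q*bt)^2 \<noteq> 0" by (subst D) (rule n)
  ultimately show ?thesis unfolding Omega_even_def using h q B L E
    by (simp add: Let_def)
qed

lemma point_mem:
  "\<exists>p. p \<in> Omega_even pl"
proof (cases pl)
  case True
  have s: "sqrt ((123/40 - 27/40*6)^2 + 4*(39/40)^2*6) = (195/40::real)"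
    by (rule real_sqrt_unique) (auto simp: power2_eq_square)
  have bt: "beta_even pl 6 (27/40) (123/40) (39/40) = 1"
    unfolding beta_even_def using True s by (simp add: sgn_sel_def mult.commute)
  have "(6::real, 27/40::real, 123/40::real, 39/40::real) \<in> Omega_even pl"
    unfolding Omega_even_def using bt by (simp add: Let_def lambda_even_def power2_eq_square)
  thus ?thesis by blast
next
  case False
  have s: "sqrt ((3081/440 - 449/440*6)^2 + 4*(63/440)^2*6) = (495/440::real)"
    by (rule real_sqrt_unique) (auto simp: power2_eq_square)
  have bt: "beta_even pl 6 (449/440) (3081/440) (63/440) = 1"
    unfolding beta_even_def using False s by (simp add: sgn_sel_def mult.commute)
  have "(6::real, 449/440::real, 3081/440::real, 63/440::real) \<in> Omega_even pl"
    unfolding Omega_even_def using bt by (simp add: Let_def lambda_even_def power2_eq_square)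
  thus ?thesis by blast
qed

theorem mainTheorem8:
  fixes pl :: bool
  shows "Omega_even pl \<noteq> {} \<and> \<not> bounded (Omega_even pl) \<and>
    (\<forall>b a c x r. (b, a, c, x) \<in> Omega_even pl \<longrightarrow> r > 0 \<longrightarrow>
        (b, r*a, r*c, r*x) \<in> Omega_even pl)"
proof -
  have sc: "(b, r*a, r*c, r*x) \<in> Omega_even pl"
    if m: "(b, a, c, x) \<in> Omega_even pl" and r: "r > 0" for b a c x r
  proof -
    have "(b, (sqrt r)^2*a, (sqrt r)^2*c, (sqrt r)^2*x) \<in> Omega_even pl"
      using scale_mem[OF m, of "sqrt r"] r by simp
    thus ?thesis using r by simp
  qed
  obtain p where p: "p \<in> Omega_even pl" using point_mem by blast
  obtain b a c x where px: "p = (b, a, c, x)" by (cases p) auto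
  have a: "a > 0" using p px unfolding Omega_even_def by auto
  have nb: "\<not> bounded (Omega_even pl)"
  proof
    assume "bounded (Omega_even pl)"
    then obtain B where B: "\<And>y. y \<in> Omega_even pl \<Longrightarrow> norm y \<le> B"
      unfolding bounded_iff by blast
    define r where "r = (\<bar>B\<bar> + 1) / a"
    have r: "r > 0" using a by (simp add: r_def)
    have m: "(b, r*a, r*c, r*x) \<in> Omega_even pl" using sc p px r by simp
    have "norm (r*a) \<le> norm ((r*a, r*c, r*x))" by (metis fst_conv norm_fst_le)
    also have "\<dots> \<le> norm (b, r*a, r*c, r*x)" by (metis snd_conv norm_snd_le)
    also have "\<dots> \<le> B" using B m by blast
    finally have "\<bar>r*a\<bar> \<le> B" by simp
    moreover have "r*a = \<bar>B\<bar> + 1" using a by (simp add: r_def)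
    ultimately show False by simp
  qed
  show ?thesis using p nb sc by blast
qed

end
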